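(* Let $F=F_2$ be the free group on $x,y$, $F^{(1)}=[F,F]$, $F^{(2)}=[F^{(1)},F^{(1)}]$, let $w\in F^{(1)}\setminus F^{(2)}$, and suppose $\Phi_w(1,i)\neq 0$, where $i^2=-1$. Then $-\mathrm{id}$ lies in the image of the word map $w:\mathrm{SL}(2,\mathbb{C})^2\to\mathrm{SL}(2,\mathbb{C})$.
   Context: Write $[a,b]=aba^{-1}b^{-1}$ and $w_{n,m}=[x^n,y^m]$ for nonzero integers $n,m$. Every $w\in F^{(1)}$ has a unique shortest expression $w=\prod_{j=1}^r w_{n_j,m_j}^{s_j}$ with $s_j\ne0$ (the $w_{n,m}$ freely generate $F^{(1)}$). $\mathrm{Supp}(w)$ is the set of pairs $(n,m)$ with $w_{n,m}$ occurring, and $R_w(n,m)$ is the sum of the exponents of all occurrences of $w_{n,m}$. Define $$\Phi_w(\lambda,\mu)=\sum_{(\alpha,\beta)\in \mathrm{Supp}(w)} R_w(\alpha,\beta)\,\mathrm{sgn}(\alpha)\,(1-\mu^{2\beta})\,\lambda^{\alpha-|\alpha|+1}\,\frac{\lambda^{2|\alpha|}-1}{\lambda^2-1},$$ where $\frac{\lambda^{2|\alpha|}-1}{\lambda^2-1}=1+\lambda^2+\dots+\lambda^{2(|\alpha|-1)}$ is a polynomial, so that $\Phi_w(1,i)$ is defined. *)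

theory Defs
  imports "HOL-Algebra.Generated_Groups" "HOL-Analysis.Analysis"
begin

text \<open>A letter is a pair (g, e): g = False means x, g = True means y;
  e = True means the inverse letter.\<close>
type_synonym letter = "bool \<times> bool"

definition inv_letter :: "letter \<Rightarrow> letter" where
  "inv_letter l = (fst l, \<not> snd l)"

definition reduced :: "letter list \<Rightarrow> bool" where
  "reduced xs \<longleftrightarrow> (\<forall>i. Suc i < length xs \<longrightarrow> xs ! Suc i \<noteq> inv_letter (xs ! i))"

fun reduce :: "letter list \<Rightarrow> letter list" where
  "reduce [] = []"
| "reduce (a # xs) =
     (case reduce xs of
        [] \<Rightarrow> [a]
      | b # ys \<Rightarrow> (if b = inv_letter a then ys else a # b # ys))"

definition free_group2 :: "letter list monoid" where
  "free_group2 = \<lparr>carrier = {xs. reduced xs}, monoid.mult = (\<lambda>xs ys. reduce (xs @ ys)), one = []\<rparr>"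

definition gen_x :: "letter list" where "gen_x = [(False, False)]"
definition gen_y :: "letter list" where "gen_y = [(True, False)]"

definition commF :: "letter list \<Rightarrow> letter list \<Rightarrow> letter list" where
  "commF a b = a \<otimes>\<^bsub>free_group2\<^esub> b \<otimes>\<^bsub>free_group2\<^esub> inv\<^bsub>free_group2\<^esub> a
                 \<otimes>\<^bsub>free_group2\<^esub> inv\<^bsub>free_group2\<^esub> b"

definition wnm :: "int \<Rightarrow> int \<Rightarrow> letter list" where
  "wnm n m = commF (gen_x [^]\<^bsub>free_group2\<^esub> n) (gen_y [^]\<^bsub>free_group2\<^esub> m)"

text \<open>An expression is a list of ((n_j, m_j), s_j) standing for the product of
  w_{n_j,m_j}^{s_j}, with all entries nonzero.\<close>
definition expr_ok :: "((int \<times> int) \<times> int) list \<Rightarrow> bool" where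
  "expr_ok e \<longleftrightarrow> (\<forall>((n, m), s) \<in> set e. n \<noteq> 0 \<and> m \<noteq> 0 \<and> s \<noteq> 0)"

definition expr_val :: "((int \<times> int) \<times> int) list \<Rightarrow> letter list" where
  "expr_val e = foldr (\<lambda>((n, m), s) acc. (wnm n m [^]\<^bsub>free_group2\<^esub> s) \<otimes>\<^bsub>free_group2\<^esub> acc)
                      e \<one>\<^bsub>free_group2\<^esub>"

definition shortest_expr :: "letter list \<Rightarrow> ((int \<times> int) \<times> int) list" where
  "shortest_expr w = (SOME e. expr_ok e \<and> expr_val e = w \<and>
      (\<forall>e'. expr_ok e' \<and> expr_val e' = w \<longrightarrow> length e \<le> length e'))"

definition Supp :: "letter list \<Rightarrow> (int \<times> int) set" where
  "Supp w = fst ` set (shortest_expr w)"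

definition R :: "letter list \<Rightarrow> int \<Rightarrow> int \<Rightarrow> int" where
  "R w n m = sum_list (map snd (filter (\<lambda>p. fst p = (n, m)) (shortest_expr w)))"

definition Phi :: "letter list \<Rightarrow> complex \<Rightarrow> complex \<Rightarrow> complex" where
  "Phi w lam mu = (\<Sum>(\<alpha>, \<beta>) \<in> Supp w.
      of_int (R w \<alpha> \<beta>) * of_int (sgn \<alpha>) * (1 - mu powi (2 * \<beta>))
      * lam powi (\<alpha> - \<bar>\<alpha>\<bar> + 1) * (\<Sum>k < nat \<bar>\<alpha>\<bar>. lam ^ (2 * k)))"

definition SL2 :: "(complex^2^2) set" where
  "SL2 = {A. det A = 1}"

definition letter_mat :: "complex^2^2 \<Rightarrow> complex^2^2 \<Rightarrow> letter \<Rightarrow> complex^2^2" where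
  "letter_mat A B l = (let M = (if fst l then B else A) in if snd l then matrix_inv M else M)"

definition eval_word :: "letter list \<Rightarrow> complex^2^2 \<Rightarrow> complex^2^2 \<Rightarrow> complex^2^2" where
  "eval_word w A B = foldr (\<lambda>l M. letter_mat A B l ** M) w (mat 1)"

end

theory Submission
  imports Defs
begin


lemma inv_inv_letter[simp]: "inv_letter (inv_letter a) = a"
  by (simp add: inv_letter_def)
lemma inv_letter_neq[simp]: "inv_letter a \<noteq> a" "a \<noteq> inv_letter a"
  by (auto simp: inv_letter_def prod_eq_iff)

definition fa :: "letter \<Rightarrow> letter list \<Rightarrow> letter list" where
  "fa a r = (case r of [] \<Rightarrow> [a] | b # ys \<Rightarrow> (if b = inv_letter a then ys else a # b # ys))"

lemma reduce_Cons: "reduce (a # xs) = fa a (reduce xs)"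
  by (simp add: fa_def)

lemma reduced_Nil[simp]: "reduced []" by (simp add: reduced_def)
lemma reduced_Cons_Cons: "reduced (a # b # t) \<longleftrightarrow> b \<noteq> inv_letter a \<and> reduced (b # t)"
  apply (simp add: reduced_def)
  apply safe
    apply force
   apply (metis Suc_less_eq nth_Cons_Suc)
  by (metis less_Suc_eq_0_disj nth_Cons_0 nth_Cons_Suc)
lemma reduced_single[simp]: "reduced [a]" by (simp add: reduced_def)
lemma reduced_tl: "reduced (a # t) \<Longrightarrow> reduced t"
  by (cases t) (auto simp: reduced_Cons_Cons)

lemma reduced_fa: "reduced r \<Longrightarrow> reduced (fa a r)"
  by (cases r) (auto simp: fa_def reduced_Cons_Cons dest: reduced_tl)

lemma reduced_reduce: "reduced (reduce xs)"
  by (induction xs) (auto simp: reduce_Cons reduced_fa simp del: reduce.simps(2))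

lemma reduce_reduced: "reduced xs \<Longrightarrow> reduce xs = xs"
proof (induction xs)
  case Nil then show ?case by simp
next
  case (Cons a xs)
  then show ?case
    by (cases xs) (auto simp: reduce_Cons fa_def reduced_Cons_Cons dest: reduced_tl simp del: reduce.simps(2))
qed

lemma reduce_reduce[simp]: "reduce (reduce xs) = reduce xs"
  by (simp add: reduce_reduced reduced_reduce)

lemma reduce_append_right: "reduce (xs @ reduce ys) = reduce (xs @ ys)"
  by (induction xs) (auto simp: reduce_Cons simp del: reduce.simps(2))

lemma fa_cancel: "reduced r \<Longrightarrow> fa a (fa (inv_letter a) r) = r"
proof (cases r)
  case Nil then show ?thesis by (simp add: fa_def)
next
  case (Cons c t)
  assume r: "reduced r"
  show ?thesis
  proof (cases "c = a")
    case True
    have 1: "fa (inv_letter a) r = t" using Cons True by (simp add: fa_def)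
    show ?thesis
    proof (cases t)
      case Nil then show ?thesis using 1 Cons True by (simp add: fa_def)
    next
      case (Cons d t')
      have "d \<noteq> inv_letter a" using r \<open>r = c # t\<close> Cons True by (simp add: reduced_Cons_Cons)
      then show ?thesis using 1 Cons \<open>r = c # t\<close> True by (simp add: fa_def)
    qed
  next
    case False
    have 1: "fa (inv_letter a) r = inv_letter a # r" using Cons False by (simp add: fa_def)
    show ?thesis unfolding 1 by (simp add: fa_def)
  qed
qed

lemma reduce_cancel: "reduce (a # inv_letter a # zs) = reduce zs"
proof -
  have "reduce (a # inv_letter a # zs) = fa a (fa (inv_letter a) (reduce zs))"
    by (simp only: reduce_Cons)
  also have "\<dots> = reduce zs" by (rule fa_cancel[OF reduced_reduce])
  finally show ?thesis .
qed

lemma reduce_append_left: "reduce (reduce xs @ ys) = reduce (xs @ ys)"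
proof (induction xs)
  case Nil then show ?case by simp
next
  case (Cons a xs)
  have "reduce ((a # xs) @ ys) = fa a (reduce (reduce xs @ ys))"
    using Cons by (simp only: append_Cons reduce_Cons)
  also have "\<dots> = reduce (fa a (reduce xs) @ ys)"
  proof (cases "reduce xs")
    case Nil then show ?thesis by (simp add: fa_def)
  next
    case (Cons b t)
    show ?thesis
    proof (cases "b = inv_letter a")
      case True
      have "fa a (reduce (reduce xs @ ys)) = reduce (a # inv_letter a # t @ ys)"
        using Cons True by (simp only: reduce_Cons append_Cons)
      also have "\<dots> = reduce (t @ ys)" by (rule reduce_cancel)
      finally show ?thesis using Cons True by (simp add: fa_def)
    next
      case False
      have "fa a (reduce (reduce xs @ ys)) = reduce (a # b # t @ ys)"
        using Cons by (simp only: reduce_Cons append_Cons)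
      moreover have "a # b # t = fa a (reduce xs)" using Cons False by (simp add: fa_def)
      ultimately show ?thesis by (metis append_Cons)
    qed
  qed
  finally show ?case by (simp only: reduce_Cons)
qed

definition invl :: "letter list \<Rightarrow> letter list" where
  "invl xs = rev (map inv_letter xs)"

lemma invl_invl[simp]: "invl (invl xs) = xs"
  by (simp add: invl_def rev_map comp_def)

lemma reduce_invl: "reduce (xs @ invl xs @ q) = reduce q"
proof (induction xs arbitrary: q)
  case (Cons a xs)
  have "reduce ((a # xs) @ invl (a # xs) @ q) = fa a (reduce (xs @ invl xs @ (inv_letter a # q)))"
    by (simp add: invl_def reduce_Cons del: reduce.simps(2))
  also have "\<dots> = fa a (reduce (inv_letter a # q))" using Cons by (simp only:)
  also have "\<dots> = reduce q"
    by (metis reduce_Cons reduce_cancel)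
  finally show ?case .
qed (simp add: invl_def)

lemma group_F: "group free_group2"
proof (rule groupI)
  show "\<one>\<^bsub>free_group2\<^esub> \<in> carrier free_group2" by (simp add: free_group2_def)
  fix x y z
  assume x: "x \<in> carrier free_group2"
  show "x \<otimes>\<^bsub>free_group2\<^esub> y \<in> carrier free_group2" if "y \<in> carrier free_group2"
    by (simp add: free_group2_def reduced_reduce)
  show "x \<otimes>\<^bsub>free_group2\<^esub> y \<otimes>\<^bsub>free_group2\<^esub> z = x \<otimes>\<^bsub>free_group2\<^esub> (y \<otimes>\<^bsub>free_group2\<^esub> z)"
    by (simp add: free_group2_def reduce_append_left reduce_append_right)
  show "\<one>\<^bsub>free_group2\<^esub> \<otimes>\<^bsub>free_group2\<^esub> x = x"
    using x by (simp add: free_group2_def reduce_reduced)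
  show "\<exists>y\<in>carrier free_group2. y \<otimes>\<^bsub>free_group2\<^esub> x = \<one>\<^bsub>free_group2\<^esub>"
  proof (rule bexI[of _ "reduce (invl x)"])
    show "reduce (invl x) \<in> carrier free_group2" by (simp add: free_group2_def reduced_reduce)
    have "reduce (invl x @ invl (invl x) @ []) = []" using reduce_invl[of "invl x" "[]"] by simp
    then show "reduce (invl x) \<otimes>\<^bsub>free_group2\<^esub> x = \<one>\<^bsub>free_group2\<^esub>"
      by (simp add: free_group2_def reduce_append_left)
  qed
qed



definition gcomm :: "('a, 'b) monoid_scheme \<Rightarrow> 'a \<Rightarrow> 'a \<Rightarrow> 'a" where
  "gcomm G a b = a \<otimes>\<^bsub>G\<^esub> b \<otimes>\<^bsub>G\<^esub> inv\<^bsub>G\<^esub> a \<otimes>\<^bsub>G\<^esub> inv\<^bsub>G\<^esub> b"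

context group begin

lemma cancel1[simp]: "x \<in> carrier G \<Longrightarrow> y \<in> carrier G \<Longrightarrow> x \<otimes> (inv x \<otimes> y) = y"
  by (simp flip: m_assoc)
lemma cancel2[simp]: "x \<in> carrier G \<Longrightarrow> y \<in> carrier G \<Longrightarrow> inv x \<otimes> (x \<otimes> y) = y"
  by (simp flip: m_assoc)

lemmas gsimps = m_assoc inv_mult_group gcomm_def

lemma gcomm_closed[simp]: "a \<in> carrier G \<Longrightarrow> b \<in> carrier G \<Longrightarrow> gcomm G a b \<in> carrier G"
  by (simp add: gcomm_def)

lemma conj_gen:
  assumes W: "W \<subseteq> carrier G" and g: "g \<in> carrier G"
    and hyp: "\<And>w. w \<in> W \<Longrightarrow> g \<otimes> w \<otimes> inv g \<in> generate G W"
    and u: "u \<in> generate G W"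
  shows "g \<otimes> u \<otimes> inv g \<in> generate G W"
  using u
proof (induction rule: generate.induct)
  case one then show ?case using g by (simp add: generate.one)
next
  case (incl h) then show ?case by (rule hyp)
next
  case (inv h)
  have hc: "h \<in> carrier G" using inv W by auto
  have "g \<otimes> inv h \<otimes> inv g = inv (g \<otimes> h \<otimes> inv g)" using hc g by (simp add: gsimps)
  then show ?case using generate_m_inv_closed[OF W hyp[OF inv]] by simp
next
  case (eng h1 h2)
  have c: "h1 \<in> carrier G" "h2 \<in> carrier G" using eng generate_in_carrier[OF W] by auto
  have "g \<otimes> (h1 \<otimes> h2) \<otimes> inv g = (g \<otimes> h1 \<otimes> inv g) \<otimes> (g \<otimes> h2 \<otimes> inv g)"
    using c g by (simp add: gsimps)
  then show ?case using generate.eng[OF eng.IH] by simp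
qed

lemma normal_from_gens:
  assumes W: "W \<subseteq> carrier G" and S: "S \<subseteq> carrier G"
    and hyp1: "\<And>s w. s \<in> S \<Longrightarrow> w \<in> W \<Longrightarrow> s \<otimes> w \<otimes> inv s \<in> generate G W"
    and hyp2: "\<And>s w. s \<in> S \<Longrightarrow> w \<in> W \<Longrightarrow> inv s \<otimes> w \<otimes> s \<in> generate G W"
    and g: "g \<in> generate G S"
  shows "(\<forall>u\<in>generate G W. g \<otimes> u \<otimes> inv g \<in> generate G W) \<and>
         (\<forall>u\<in>generate G W. inv g \<otimes> u \<otimes> g \<in> generate G W)"
  using g
proof (induction rule: generate.induct)
  case one then show ?case using generate_in_carrier[OF W] by auto
next
  case (incl h)
  have hc: "h \<in> carrier G" using incl S by auto
  show ?case
    using conj_gen[OF W hc hyp1[OF incl]] conj_gen[OF W inv_closed[OF hc], of] hyp2[OF incl] hc by auto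
next
  case (inv h)
  have hc: "h \<in> carrier G" using inv S by auto
  show ?case
    using conj_gen[OF W hc hyp1[OF inv]] conj_gen[OF W inv_closed[OF hc], of] hyp2[OF inv] hc by auto
next
  case (eng h1 h2)
  have c: "h1 \<in> carrier G" "h2 \<in> carrier G" using eng generate_in_carrier[OF S] by auto
  show ?case
  proof safe
    fix u assume u: "u \<in> generate G W"
    have uc: "u \<in> carrier G" using u generate_in_carrier[OF W] by auto
    have "h1 \<otimes> h2 \<otimes> u \<otimes> inv (h1 \<otimes> h2) = h1 \<otimes> (h2 \<otimes> u \<otimes> inv h2) \<otimes> inv h1"
      using c uc by (simp add: gsimps)
    then show "h1 \<otimes> h2 \<otimes> u \<otimes> inv (h1 \<otimes> h2) \<in> generate G W" using eng.IH u by auto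
    have "inv (h1 \<otimes> h2) \<otimes> u \<otimes> (h1 \<otimes> h2) = inv h2 \<otimes> (inv h1 \<otimes> u \<otimes> h1) \<otimes> h2"
      using c uc by (simp add: gsimps)
    then show "inv (h1 \<otimes> h2) \<otimes> u \<otimes> (h1 \<otimes> h2) \<in> generate G W" using eng.IH u by auto
  qed
qed

lemma comm_from_gens:
  assumes H: "subgroup H G" and S: "S \<subseteq> carrier G"
    and nrm: "\<And>g u. g \<in> carrier G \<Longrightarrow> u \<in> H \<Longrightarrow> g \<otimes> u \<otimes> inv g \<in> H"
    and hyp: "\<And>s t. s \<in> S \<Longrightarrow> t \<in> S \<Longrightarrow> gcomm G s t \<in> H"
    and g: "g \<in> generate G S" and h: "h \<in> generate G S"
  shows "gcomm G g h \<in> H"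
proof -
  have Hc: "\<And>u. u \<in> H \<Longrightarrow> u \<in> carrier G" using H subgroup.subset by blast
  have gen_c: "\<And>u. u \<in> generate G S \<Longrightarrow> u \<in> carrier G" using generate_in_carrier[OF S] by auto
  have step1: "gcomm G s h \<in> H" if s: "s \<in> S" and h: "h \<in> generate G S" for s h
    using h
  proof (induction rule: generate.induct)
    case one then show ?case using s S H by (auto simp: gcomm_def subgroup.one_closed)
  next
    case (incl t) then show ?case using hyp s by auto
  next
    case (inv t)
    have c: "s \<in> carrier G" "t \<in> carrier G" using s inv S by auto
    have "gcomm G s (inv t) = inv t \<otimes> inv (gcomm G s t) \<otimes> inv (inv t)"
      using c by (simp add: gsimps)
    then show ?case using nrm[OF inv_closed[OF c(2)] subgroup.m_inv_closed[OF H hyp[OF s inv]]] by simp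
  next
    case (eng h1 h2)
    have c: "s \<in> carrier G" "h1 \<in> carrier G" "h2 \<in> carrier G" using s S eng gen_c by auto
    have "gcomm G s (h1 \<otimes> h2) = gcomm G s h1 \<otimes> (h1 \<otimes> gcomm G s h2 \<otimes> inv h1)"
      using c by (simp add: gsimps)
    then show ?case using subgroup.m_closed[OF H eng.IH(1) nrm[OF c(2) eng.IH(2)]] by simp
  qed
  show ?thesis using g
  proof (induction rule: generate.induct)
    case one then show ?case using h gen_c H by (auto simp: gcomm_def subgroup.one_closed)
  next
    case (incl s) then show ?case using step1 h by auto
  next
    case (inv s)
    have c: "s \<in> carrier G" "h \<in> carrier G" using inv S h gen_c by auto
    have "gcomm G (inv s) h = inv s \<otimes> inv (gcomm G s h) \<otimes> inv (inv s)"
      using c by (simp add: gsimps)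
    then show ?case using nrm[OF inv_closed[OF c(1)] subgroup.m_inv_closed[OF H step1[OF inv h]]] by simp
  next
    case (eng g1 g2)
    have c: "g1 \<in> carrier G" "g2 \<in> carrier G" "h \<in> carrier G" using h eng gen_c by auto
    have "gcomm G (g1 \<otimes> g2) h = (g1 \<otimes> gcomm G g2 h \<otimes> inv g1) \<otimes> gcomm G g1 h"
      using c by (simp add: gsimps)
    then show ?case using subgroup.m_closed[OF H nrm[OF c(1) eng.IH(2)] eng.IH(1)] by simp
  qed
qed

lemma conj_x:
  assumes "x \<in> carrier G" "y \<in> carrier G"
  shows "x [^] (a::int) \<otimes> gcomm G (x [^] n) (y [^] (m::int)) \<otimes> inv (x [^] a)
       = gcomm G (x [^] (a + n)) (y [^] m) \<otimes> inv (gcomm G (x [^] a) (y [^] m))"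
  using assms by (simp add: int_pow_mult gsimps)

lemma conj_y:
  assumes "x \<in> carrier G" "y \<in> carrier G"
  shows "y [^] (b::int) \<otimes> gcomm G (x [^] (n::int)) (y [^] m) \<otimes> inv (y [^] b)
       = inv (gcomm G (x [^] n) (y [^] b)) \<otimes> gcomm G (x [^] n) (y [^] (b + m))"
  using assms by (simp add: int_pow_mult gsimps)

end


interpretation F: group free_group2 by (rule group_F)

lemma commF_gcomm: "commF a b = gcomm free_group2 a b"
  by (simp add: commF_def gcomm_def)

lemma carrier_F: "carrier free_group2 = {xs. reduced xs}" by (simp add: free_group2_def)
lemma mult_F: "x \<otimes>\<^bsub>free_group2\<^esub> y = reduce (x @ y)" by (simp add: free_group2_def)
lemma one_F: "\<one>\<^bsub>free_group2\<^esub> = []" by (simp add: free_group2_def)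

lemma gens_c: "gen_x \<in> carrier free_group2" "gen_y \<in> carrier free_group2"
  by (auto simp: carrier_F gen_x_def gen_y_def)

lemma inv_single: "inv\<^bsub>free_group2\<^esub> [a] = [inv_letter a]"
proof (rule F.inv_equality)
  show "[inv_letter a] \<otimes>\<^bsub>free_group2\<^esub> [a] = \<one>\<^bsub>free_group2\<^esub>"
    using reduce_cancel[of "inv_letter a" "[]"] by (simp add: mult_F one_F)
qed (auto simp: carrier_F)

lemma carrier_gen: "carrier free_group2 = generate free_group2 {gen_x, gen_y}"
proof
  show "generate free_group2 {gen_x, gen_y} \<subseteq> carrier free_group2"
    using F.generate_incl gens_c by auto
  have single: "[a] \<in> generate free_group2 {gen_x, gen_y}" for a :: letter
  proof -
    obtain g e where a: "a = (g, e)" by fastforce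
    show ?thesis
    proof (cases e)
      case False
      then show ?thesis using a by (cases g) (auto simp: gen_x_def gen_y_def intro: generate.incl)
    next
      case True
      have "[a] = inv\<^bsub>free_group2\<^esub> [(g, False)]" using True a
        by (simp add: inv_single inv_letter_def)
      then show ?thesis using generate.inv[of "[(g, False)]" "{gen_x, gen_y}" free_group2]
        by (cases g) (auto simp: gen_x_def gen_y_def)
    qed
  qed
  show "carrier free_group2 \<subseteq> generate free_group2 {gen_x, gen_y}"
  proof
    fix l assume "l \<in> carrier free_group2"
    then have "reduced l" by (simp add: carrier_F)
    then show "l \<in> generate free_group2 {gen_x, gen_y}"
    proof (induction l)
      case Nil then show ?case using generate.one[of free_group2] by (simp add: one_F)
    next
      case (Cons a t)
      have "a # t = [a] \<otimes>\<^bsub>free_group2\<^esub> t"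
        using reduce_reduced[OF Cons.prems] by (simp add: mult_F)
      then show ?case using generate.eng[OF single Cons.IH[OF reduced_tl[OF Cons.prems]]] by simp
    qed
  qed
qed

definition Wset :: "letter list set" where
  "Wset = {wnm n m | n m. True}"

lemma wnm_c: "wnm n m \<in> carrier free_group2"
  by (simp add: wnm_def commF_gcomm gens_c)

lemma Wset_c: "Wset \<subseteq> carrier free_group2"
  using wnm_c by (auto simp: Wset_def)

lemma wnm_in: "wnm n m \<in> generate free_group2 Wset"
  by (rule generate.incl) (auto simp: Wset_def)

abbreviation "HW \<equiv> generate free_group2 Wset"

lemma HW_mult: "a \<in> HW \<Longrightarrow> b \<in> HW \<Longrightarrow> a \<otimes>\<^bsub>free_group2\<^esub> b \<in> HW"
  by (rule generate.eng)
lemma HW_inv: "a \<in> HW \<Longrightarrow> inv\<^bsub>free_group2\<^esub> a \<in> HW"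
  by (rule F.generate_m_inv_closed[OF Wset_c])

lemma conj_hyps:
  assumes s: "s \<in> {gen_x, gen_y}" and w: "w \<in> Wset"
  shows "s \<otimes>\<^bsub>free_group2\<^esub> w \<otimes>\<^bsub>free_group2\<^esub> inv\<^bsub>free_group2\<^esub> s \<in> HW"
    and "inv\<^bsub>free_group2\<^esub> s \<otimes>\<^bsub>free_group2\<^esub> w \<otimes>\<^bsub>free_group2\<^esub> s \<in> HW"
proof -
  obtain n m where w: "w = wnm n m" using w by (auto simp: Wset_def)
  note X = F.conj_x[OF gens_c, unfolded commF_gcomm[symmetric] wnm_def[symmetric]]
  note Y = F.conj_y[OF gens_c, unfolded commF_gcomm[symmetric] wnm_def[symmetric]]
  have x1: "gen_x = gen_x [^]\<^bsub>free_group2\<^esub> (1::int)" using gens_c by simp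
  have xm: "inv\<^bsub>free_group2\<^esub> gen_x = gen_x [^]\<^bsub>free_group2\<^esub> (-1::int)"
    using gens_c F.int_pow_neg[of gen_x 1] by simp
  have y1: "gen_y = gen_y [^]\<^bsub>free_group2\<^esub> (1::int)" using gens_c by simp
  have ym: "inv\<^bsub>free_group2\<^esub> gen_y = gen_y [^]\<^bsub>free_group2\<^esub> (-1::int)"
    using gens_c F.int_pow_neg[of gen_y 1] by simp
  have ii: "\<And>g. g \<in> carrier free_group2 \<Longrightarrow> inv\<^bsub>free_group2\<^esub> (inv\<^bsub>free_group2\<^esub> g) = g" by simp
  have "s \<otimes>\<^bsub>free_group2\<^esub> w \<otimes>\<^bsub>free_group2\<^esub> inv\<^bsub>free_group2\<^esub> s \<in> HW
      \<and> inv\<^bsub>free_group2\<^esub> s \<otimes>\<^bsub>free_group2\<^esub> w \<otimes>\<^bsub>free_group2\<^esub> s \<in> HW"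
  proof (cases "s = gen_x")
    case True
    have a: "gen_x \<otimes>\<^bsub>free_group2\<^esub> wnm n m \<otimes>\<^bsub>free_group2\<^esub> inv\<^bsub>free_group2\<^esub> gen_x
        = wnm (1 + n) m \<otimes>\<^bsub>free_group2\<^esub> inv\<^bsub>free_group2\<^esub> (wnm 1 m)"
      using X[of 1 n m] gens_c by (simp add: wnm_def)
    have b: "inv\<^bsub>free_group2\<^esub> gen_x \<otimes>\<^bsub>free_group2\<^esub> wnm n m \<otimes>\<^bsub>free_group2\<^esub> gen_x
        = wnm (-1 + n) m \<otimes>\<^bsub>free_group2\<^esub> inv\<^bsub>free_group2\<^esub> (wnm (-1) m)"
      using X[of "-1" n m] gens_c by (simp add: wnm_def F.int_pow_neg[of gen_x 1])
    show ?thesis using True a b w HW_mult HW_inv wnm_in by simp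
  next
    case False
    then have sy: "s = gen_y" using s by auto
    have a: "gen_y \<otimes>\<^bsub>free_group2\<^esub> wnm n m \<otimes>\<^bsub>free_group2\<^esub> inv\<^bsub>free_group2\<^esub> gen_y
        = inv\<^bsub>free_group2\<^esub> (wnm n 1) \<otimes>\<^bsub>free_group2\<^esub> wnm n (1 + m)"
      using Y[of 1 n m] gens_c by (simp add: wnm_def)
    have b: "inv\<^bsub>free_group2\<^esub> gen_y \<otimes>\<^bsub>free_group2\<^esub> wnm n m \<otimes>\<^bsub>free_group2\<^esub> gen_y
        = inv\<^bsub>free_group2\<^esub> (wnm n (-1)) \<otimes>\<^bsub>free_group2\<^esub> wnm n (-1 + m)"
      using Y[of "-1" n m] gens_c by (simp add: wnm_def F.int_pow_neg[of gen_y 1])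
    show ?thesis using sy a b w HW_mult HW_inv wnm_in by simp
  qed
  then show "s \<otimes>\<^bsub>free_group2\<^esub> w \<otimes>\<^bsub>free_group2\<^esub> inv\<^bsub>free_group2\<^esub> s \<in> HW"
    and "inv\<^bsub>free_group2\<^esub> s \<otimes>\<^bsub>free_group2\<^esub> w \<otimes>\<^bsub>free_group2\<^esub> s \<in> HW" by auto
qed

lemma HW_normal: "g \<in> carrier free_group2 \<Longrightarrow> u \<in> HW \<Longrightarrow>
   g \<otimes>\<^bsub>free_group2\<^esub> u \<otimes>\<^bsub>free_group2\<^esub> inv\<^bsub>free_group2\<^esub> g \<in> HW"
  using F.normal_from_gens[where W=Wset and S="{gen_x, gen_y}" and g=g, OF Wset_c _ conj_hyps(1) conj_hyps(2)] gens_c carrier_gen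
  by auto

lemma derived_HW: "derived free_group2 (carrier free_group2) \<subseteq> HW"
proof -
  have sub: "subgroup HW free_group2" by (rule F.generate_is_subgroup[OF Wset_c])
  have "derived_set free_group2 (carrier free_group2) \<subseteq> HW"
  proof clarify
    fix g h assume g: "g \<in> carrier free_group2" and h: "h \<in> carrier free_group2"
    have gen: "gcomm free_group2 s t \<in> HW" if "s \<in> {gen_x, gen_y}" "t \<in> {gen_x, gen_y}" for s t
    proof -
      have xx: "gcomm free_group2 gen_x gen_x = \<one>\<^bsub>free_group2\<^esub>"
        and yy: "gcomm free_group2 gen_y gen_y = \<one>\<^bsub>free_group2\<^esub>"
        using gens_c by (simp_all add: F.gsimps)
      have xy: "gcomm free_group2 gen_x gen_y = wnm 1 1"
        using gens_c by (simp add: wnm_def commF_gcomm)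
      have yx: "gcomm free_group2 gen_y gen_x = inv\<^bsub>free_group2\<^esub> (wnm 1 1)"
        using gens_c by (simp add: wnm_def commF_gcomm F.gsimps)
      show ?thesis using that xx yy xy yx generate.one wnm_in HW_inv by auto
    qed
    show "g \<otimes>\<^bsub>free_group2\<^esub> h \<otimes>\<^bsub>free_group2\<^esub> inv\<^bsub>free_group2\<^esub> g \<otimes>\<^bsub>free_group2\<^esub> inv\<^bsub>free_group2\<^esub> h \<in> HW"
      using F.comm_from_gens[where H=HW and S="{gen_x, gen_y}" and g=g and h=h, OF sub _ HW_normal gen] gens_c g h carrier_gen
      by (auto simp: gcomm_def)
  qed
  then show ?thesis unfolding derived_def using F.generate_subgroup_incl[OF _ sub] by blast
qed

lemma expr_val_Nil: "expr_val [] = []" by (simp add: expr_val_def one_F)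
lemma expr_val_Cons: "expr_val (((n,m),s) # e) = wnm n m [^]\<^bsub>free_group2\<^esub> s \<otimes>\<^bsub>free_group2\<^esub> expr_val e"
  by (simp add: expr_val_def)

lemma expr_val_c: "expr_val e \<in> carrier free_group2"
proof (induction e)
  case Nil then show ?case by (simp add: expr_val_Nil carrier_F)
next
  case (Cons q e)
  obtain n m s where q: "q = ((n,m),s)" by (metis prod.collapse)
  show ?case unfolding q expr_val_Cons using Cons wnm_c by (intro F.m_closed F.int_pow_closed)
qed

lemma expr_val_append: "expr_val (e1 @ e2) = expr_val e1 \<otimes>\<^bsub>free_group2\<^esub> expr_val e2"
proof (induction e1)
  case Nil then show ?case using expr_val_c by (simp add: expr_val_Nil flip: one_F)
next
  case (Cons q e1)
  obtain n m s where q: "q = ((n,m),s)" by (metis prod.collapse)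
  show ?case using Cons q by (simp add: expr_val_Cons F.m_assoc expr_val_c wnm_c)
qed

lemma wnm_zero: "n = 0 \<or> m = 0 \<Longrightarrow> wnm n m = []"
  using gens_c by (auto simp: wnm_def commF_gcomm gcomm_def one_F[symmetric])

lemma HW_expr: "u \<in> HW \<Longrightarrow> \<exists>e. expr_ok e \<and> expr_val e = u"
proof (induction rule: generate.induct)
  case one then show ?case by (auto intro!: exI[of _ "[]"] simp: expr_ok_def expr_val_Nil one_F)
next
  case (incl h)
  then obtain n m where h: "h = wnm n m" by (auto simp: Wset_def)
  show ?case
  proof (cases "n = 0 \<or> m = 0")
    case True then show ?thesis using h wnm_zero
      by (auto intro!: exI[of _ "[]"] simp: expr_ok_def expr_val_Nil)
  next
    case False then show ?thesis using h wnm_c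
      by (auto intro!: exI[of _ "[((n,m),1)]"] simp: expr_ok_def expr_val_Cons expr_val_Nil simp flip: one_F)
  qed
next
  case (inv h)
  then obtain n m where h: "h = wnm n m" by (auto simp: Wset_def)
  show ?case
  proof (cases "n = 0 \<or> m = 0")
    case True then show ?thesis using h wnm_zero inv_single
      by (auto intro!: exI[of _ "[]"] simp: expr_ok_def expr_val_Nil one_F[symmetric])
  next
    case False then show ?thesis using h wnm_c F.int_pow_neg[of "wnm n m" 1]
      by (auto intro!: exI[of _ "[((n,m),-1)]"] simp: expr_ok_def expr_val_Cons expr_val_Nil simp flip: one_F)
  qed
next
  case (eng a b)
  then obtain e1 e2 where "expr_ok e1" "expr_val e1 = a" "expr_ok e2" "expr_val e2 = b" by blast
  then show ?case by (auto intro!: exI[of _ "e1 @ e2"] simp: expr_ok_def expr_val_append)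
qed



definition Dm :: "complex \<Rightarrow> complex^2^2" where
  "Dm z = (\<chi> i j. if i = j then (if i = 1 then z else inverse z) else 0)"

definition Bm :: "complex^2^2" where
  "Bm = (\<chi> i j. if i = 1 \<and> j = 2 then 1 else if i = 2 \<and> j = 1 then -1 else 0)"

lemma two_neq: "(1::2) \<noteq> 2" "(2::2) \<noteq> 1" by auto

lemma Dm_mult: "Dm a ** Dm b = Dm (a * b)"
  by (simp add: Dm_def matrix_matrix_mult_def vec_eq_iff forall_2 sum_2 two_neq)

lemma Dm_one: "Dm 1 = mat 1"
  by (simp add: Dm_def mat_def vec_eq_iff forall_2 two_neq)

lemma Dm_m1: "Dm (-1) = - mat 1"
  by (simp add: Dm_def mat_def vec_eq_iff forall_2 two_neq)

lemma Bm_Dm: "Bm ** Dm z = Dm (inverse z) ** Bm"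
  by (simp add: Dm_def Bm_def matrix_matrix_mult_def vec_eq_iff forall_2 sum_2 two_neq)

lemma Bm_Bm: "Bm ** (- Bm) = mat 1" "(- Bm) ** Bm = mat 1"
  by (simp_all add: Bm_def mat_def matrix_matrix_mult_def vec_eq_iff forall_2 sum_2 two_neq)

lemma det_Dm: "z \<noteq> 0 \<Longrightarrow> det (Dm z) = 1"
  by (simp add: det_2 Dm_def two_neq)

lemma det_Bm: "det Bm = 1"
  by (simp add: det_2 Bm_def two_neq)

lemma matrix_inv_eq:
  fixes M N :: "complex^2^2"
  assumes "M ** N = mat 1" "N ** M = mat 1"
  shows "matrix_inv M = N"
proof -
  have ex: "\<exists>N'. M ** N' = mat 1 \<and> N' ** M = mat 1" using assms by blast
  define N' where "N' = matrix_inv M"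
  have N': "M ** N' = mat 1 \<and> N' ** M = mat 1"
    unfolding N'_def matrix_inv_def by (rule someI_ex[OF ex])
  have "N' = N' ** (M ** N)" using assms by (simp add: matrix_mul_rid)
  also have "\<dots> = (N' ** M) ** N" by (simp add: matrix_mul_assoc)
  also have "\<dots> = N" using N' by (simp add: matrix_mul_lid)
  finally show ?thesis by (simp add: N'_def)
qed

lemma inv_Dm: "z \<noteq> 0 \<Longrightarrow> matrix_inv (Dm z) = Dm (inverse z)"
  by (rule matrix_inv_eq) (simp_all add: Dm_mult Dm_one)

lemma inv_Bm: "matrix_inv Bm = - Bm"
  by (rule matrix_inv_eq) (simp_all add: Bm_Bm)

lemma eval_Nil: "eval_word [] A B = mat 1" by (simp add: eval_word_def)
lemma eval_Cons: "eval_word (a # t) A B = letter_mat A B a ** eval_word t A B"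
  by (simp add: eval_word_def)

lemma eval_append: "eval_word (xs @ ys) A B = eval_word xs A B ** eval_word ys A B"
  by (induction xs) (simp_all add: eval_Nil eval_Cons matrix_mul_lid matrix_mul_assoc)

locale evalctx =
  fixes A B :: "complex^2^2"
  assumes cancel: "\<And>l. letter_mat A B l ** letter_mat A B (inv_letter l) = mat 1"
begin

abbreviation "h g \<equiv> eval_word g A B"

lemma eval_fa: "h (fa a r) = letter_mat A B a ** h r"
proof (cases r)
  case Nil then show ?thesis by (simp add: fa_def eval_Cons eval_Nil)
next
  case (Cons b t)
  show ?thesis
  proof (cases "b = inv_letter a")
    case True
    have "letter_mat A B a ** h r = (letter_mat A B a ** letter_mat A B b) ** h t"
      using Cons by (simp add: eval_Cons matrix_mul_assoc)
    also have "\<dots> = h t" using True cancel by (simp add: matrix_mul_lid)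
    finally show ?thesis using Cons True by (simp add: fa_def)
  qed (use Cons in \<open>simp add: fa_def eval_Cons\<close>)
qed

lemma eval_reduce: "h (reduce xs) = h xs"
  by (induction xs) (simp_all add: reduce_Cons eval_fa eval_Cons del: reduce.simps(2))

lemma eval_mult: "h (x \<otimes>\<^bsub>free_group2\<^esub> y) = h x ** h y"
  by (simp add: mult_F eval_reduce eval_append)

lemma eval_one: "h \<one>\<^bsub>free_group2\<^esub> = mat 1"
  by (simp add: one_F eval_Nil)

lemma eval_inv: "g \<in> carrier free_group2 \<Longrightarrow> h (inv\<^bsub>free_group2\<^esub> g) ** h g = mat 1"
  "g \<in> carrier free_group2 \<Longrightarrow> h g ** h (inv\<^bsub>free_group2\<^esub> g) = mat 1"
  by (simp_all flip: eval_mult add: eval_one)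

lemma eval_pow_D:
  assumes g: "g \<in> carrier free_group2" and hg: "h g = Dm z" and z: "z \<noteq> 0"
  shows "h (g [^]\<^bsub>free_group2\<^esub> (n::int)) = Dm (z powi n)"
proof -
  have nat: "h (g [^]\<^bsub>free_group2\<^esub> (k::nat)) = Dm (z ^ k)" for k
  proof (induction k)
    case 0 then show ?case by (simp add: eval_one Dm_one)
  next
    case (Suc k)
    have "h (g [^]\<^bsub>free_group2\<^esub> Suc k) = h (g [^]\<^bsub>free_group2\<^esub> k) ** h g"
      by (simp only: F.nat_pow_Suc eval_mult)
    also have "\<dots> = Dm (z ^ k * z)" by (simp only: Suc hg Dm_mult)
    finally show ?case by (simp only: power_Suc2)
  qed
  have inv: "h (inv\<^bsub>free_group2\<^esub> x) = Dm (inverse w)" if x: "x \<in> carrier free_group2"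
    and hx: "h x = Dm w" and w: "w \<noteq> 0" for x w
  proof -
    have "h (inv\<^bsub>free_group2\<^esub> x) = h (inv\<^bsub>free_group2\<^esub> x) ** (Dm w ** Dm (inverse w))"
      using w by (simp add: Dm_mult Dm_one matrix_mul_rid)
    also have "\<dots> = (h (inv\<^bsub>free_group2\<^esub> x) ** h x) ** Dm (inverse w)"
      using hx by (simp add: matrix_mul_assoc)
    also have "\<dots> = Dm (inverse w)" using eval_inv(1)[OF x] by (simp add: matrix_mul_lid)
    finally show ?thesis .
  qed
  show ?thesis
  proof (cases "n < 0")
    case True
    have "h (g [^]\<^bsub>free_group2\<^esub> n) = h (inv\<^bsub>free_group2\<^esub> (g [^]\<^bsub>free_group2\<^esub> nat (-n)))"
      using True by (subst int_pow_def2) simp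
    also have "\<dots> = Dm (inverse (z ^ nat (-n)))"
      using inv[OF F.nat_pow_closed[OF g] nat] z by simp
    also have "inverse (z ^ nat (-n)) = z powi n" using True
      by (simp add: power_int_def power_inverse)
    finally show ?thesis .
  next
    case False
    then show ?thesis using nat[of "nat n"] by (subst int_pow_def2) (simp add: power_int_def)
  qed
qed

lemma eval_pow_Y:
  assumes hy: "h gen_y = Bm"
  shows "h (gen_y [^]\<^bsub>free_group2\<^esub> (m::int)) ** Dm z
       = Dm (if even m then z else inverse z) ** h (gen_y [^]\<^bsub>free_group2\<^esub> m)"
proof -
  have nat: "h (gen_y [^]\<^bsub>free_group2\<^esub> (k::nat)) ** Dm v
       = Dm (if even k then v else inverse v) ** h (gen_y [^]\<^bsub>free_group2\<^esub> k)" for k v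
  proof (induction k arbitrary: v)
    case 0 then show ?case by (simp add: eval_one matrix_mul_lid matrix_mul_rid)
  next
    case (Suc k)
    have "h (gen_y [^]\<^bsub>free_group2\<^esub> Suc k) ** Dm v
       = h (gen_y [^]\<^bsub>free_group2\<^esub> k) ** (Bm ** Dm v)"
      by (simp add: eval_mult hy matrix_mul_assoc)
    also have "\<dots> = (h (gen_y [^]\<^bsub>free_group2\<^esub> k) ** Dm (inverse v)) ** Bm"
      by (simp add: Bm_Dm matrix_mul_assoc)
    also have "\<dots> = Dm (if even k then inverse v else v) ** h (gen_y [^]\<^bsub>free_group2\<^esub> k) ** Bm"
      using Suc[of "inverse v"] by simp
    also have "\<dots> = Dm (if even (Suc k) then v else inverse v) ** h (gen_y [^]\<^bsub>free_group2\<^esub> Suc k)"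
      by (simp only: F.nat_pow_Suc eval_mult hy matrix_mul_assoc) simp
    finally show ?case .
  qed
  show ?thesis
  proof (cases "m < 0")
    case False
    then show ?thesis using nat[of "nat m" z] by (subst (1 2) int_pow_def2) (simp add: even_nat_iff)
  next
    case True
    define k where "k = nat (-m)"
    define Y where "Y = h (gen_y [^]\<^bsub>free_group2\<^esub> k)"
    define Yi where "Yi = h (inv\<^bsub>free_group2\<^esub> (gen_y [^]\<^bsub>free_group2\<^esub> k))"
    have c: "gen_y [^]\<^bsub>free_group2\<^esub> k \<in> carrier free_group2" using gens_c by simp
    have YYi: "Y ** Yi = mat 1" "Yi ** Y = mat 1"
      using eval_inv[OF c] by (simp_all add: Y_def Yi_def)
    have ev: "even m = even k" using True by (simp add: k_def even_nat_iff)
    define z' where "z' = (if even k then z else inverse z)"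
    have "Y ** Dm z' = Dm z ** Y" using nat[of k z'] by (simp add: Y_def z'_def)
    then have "Yi ** Dm z = Yi ** Dm z ** (Y ** Yi)" using YYi by (simp add: matrix_mul_rid)
    also have "\<dots> = Yi ** (Dm z ** Y) ** Yi" by (simp add: matrix_mul_assoc)
    also have "\<dots> = Yi ** (Y ** Dm z') ** Yi" using \<open>Y ** Dm z' = Dm z ** Y\<close> by simp
    also have "\<dots> = Dm z' ** Yi" using YYi by (simp add: matrix_mul_assoc matrix_mul_lid)
    finally have "Yi ** Dm z = Dm z' ** Yi" .
    moreover have "h (gen_y [^]\<^bsub>free_group2\<^esub> m) = Yi" using True
      by (subst int_pow_def2) (simp add: Yi_def k_def)
    ultimately show ?thesis using ev by (simp add: z'_def)
  qed
qed

end



definition Nn :: "((int \<times> int) \<times> int) list \<Rightarrow> int" where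
  "Nn e = sum_list (map (\<lambda>((n, m), s). if even m then 0 else n * s) e)"

lemma Nn_Nil: "Nn [] = 0" by (simp add: Nn_def)
lemma Nn_Cons: "Nn (((n,m),s) # e) = (if even m then 0 else n * s) + Nn e" by (simp add: Nn_def)

locale evalctx2 = evalctx +
  fixes lam :: complex
  assumes lam: "lam \<noteq> 0" and hx: "eval_word gen_x A B = Dm lam" and hy: "eval_word gen_y A B = Bm"
begin

lemma eval_wnm: "h (wnm n m) = Dm (if even m then 1 else lam powi (2 * n))"
proof -
  define X where "X = gen_x [^]\<^bsub>free_group2\<^esub> n"
  define Y where "Y = gen_y [^]\<^bsub>free_group2\<^esub> m"
  define u where "u = lam powi n"
  have u: "u \<noteq> 0" using lam by (simp add: u_def)
  have Xc: "X \<in> carrier free_group2" "Y \<in> carrier free_group2" using gens_c by (simp_all add: X_def Y_def)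
  have hX: "h X = Dm u" using eval_pow_D[OF gens_c(1) hx lam] by (simp add: X_def u_def)
  have hXi: "h (inv\<^bsub>free_group2\<^esub> X) = Dm (inverse u)"
  proof -
    have "inv\<^bsub>free_group2\<^esub> X = gen_x [^]\<^bsub>free_group2\<^esub> (-n)"
      using gens_c by (simp add: X_def F.int_pow_neg)
    then show ?thesis using eval_pow_D[OF gens_c(1) hx lam, of "-n"] by (simp add: u_def power_int_minus)
  qed
  have YD: "h Y ** Dm (inverse u) = Dm (if even m then inverse u else u) ** h Y"
    using eval_pow_Y[OF hy, of m "inverse u"] by (simp add: Y_def)
  have YYi: "h Y ** h (inv\<^bsub>free_group2\<^esub> Y) = mat 1" by (rule eval_inv(2)[OF Xc(2)])
  have "h (wnm n m) = h X ** h Y ** h (inv\<^bsub>free_group2\<^esub> X) ** h (inv\<^bsub>free_group2\<^esub> Y)"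
    by (simp add: wnm_def commF_def eval_mult X_def Y_def)
  also have "\<dots> = Dm u ** (h Y ** Dm (inverse u)) ** h (inv\<^bsub>free_group2\<^esub> Y)"
    by (simp add: hX hXi matrix_mul_assoc)
  also have "\<dots> = Dm u ** Dm (if even m then inverse u else u) ** (h Y ** h (inv\<^bsub>free_group2\<^esub> Y))"
    by (simp only: YD matrix_mul_assoc)
  also have "\<dots> = Dm (u * (if even m then inverse u else u))"
    by (simp only: YYi Dm_mult matrix_mul_rid)
  also have "u * (if even m then inverse u else u) = (if even m then 1 else lam powi (2 * n))"
  proof -
    have "lam powi (n + n) = lam powi n * lam powi n" using lam by (intro power_int_add) simp
    then have "lam powi (2 * n) = lam powi n * lam powi n" by (simp only: mult_2)
    then show ?thesis using u by (simp add: u_def)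
  qed
  finally show ?thesis .
qed

lemma eval_expr: "h (expr_val e) = Dm (lam powi (2 * Nn e))"
proof (induction e)
  case Nil then show ?case by (simp add: expr_val_Nil Nn_Nil Dm_one eval_Nil)
next
  case (Cons q e)
  obtain n m s where q: "q = ((n,m),s)" by (metis prod.collapse)
  define c where "c = (if even m then 1 else lam powi (2 * n))"
  have c: "c \<noteq> 0" using lam by (simp add: c_def)
  have "h (expr_val (q # e)) = h (wnm n m [^]\<^bsub>free_group2\<^esub> s) ** h (expr_val e)"
    by (simp add: q expr_val_Cons eval_mult)
  also have "\<dots> = Dm (c powi s) ** Dm (lam powi (2 * Nn e))"
  proof -
    have hw: "h (wnm n m) = Dm c" using eval_wnm by (simp add: c_def)
    show ?thesis using eval_pow_D[OF wnm_c hw c] Cons by simp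
  qed
  also have "\<dots> = Dm (lam powi (2 * Nn (q # e)))"
  proof -
    have "c powi s = lam powi (2 * (if even m then 0 else n * s))"
      by (simp add: c_def power_int_mult mult.assoc)
    then have "c powi s * lam powi (2 * Nn e) = lam powi (2 * Nn (q # e))"
      using lam by (simp add: q Nn_Cons distrib_left power_int_add)
    then show ?thesis by (simp add: Dm_mult)
  qed
  finally show ?case .
qed

end

lemma ipow: "\<i> powi (2 * b) = (if even b then 1 else (-1::complex))"
proof -
  have "\<i> powi (2 * b) = (\<i> powi 2) powi b" by (simp add: power_int_mult)
  also have "\<dots> = (-1) powi b" by simp
  also have "\<dots> = (if even b then 1 else -1)"
    by (cases "b \<ge> 0") (auto simp: power_int_def even_nat_iff)
  finally show ?thesis .
qed

lemma sum_regroup: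
  fixes g :: "int \<times> int \<Rightarrow> complex"
  assumes "finite P" "fst ` set E \<subseteq> P"
  shows "(\<Sum>p\<in>P. of_int (sum_list (map snd (filter (\<lambda>q. fst q = p) E))) * g p)
       = sum_list (map (\<lambda>q. of_int (snd q) * g (fst q)) E)"
  using assms(2)
proof (induction E)
  case Nil then show ?case by simp
next
  case (Cons q E)
  have qP: "fst q \<in> P" using Cons.prems by auto
  have "(\<Sum>p\<in>P. of_int (sum_list (map snd (filter (\<lambda>q'. fst q' = p) (q # E)))) * g p)
     = (\<Sum>p\<in>P. (if fst q = p then of_int (snd q) * g p else 0)
          + of_int (sum_list (map snd (filter (\<lambda>q'. fst q' = p) E))) * g p)"
    by (intro sum.cong) (auto simp: distrib_right)
  also have "\<dots> = of_int (snd q) * g (fst q) + sum_list (map (\<lambda>q. of_int (snd q) * g (fst q)) E)"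
    using Cons qP assms(1) by (simp add: sum.distrib sum.delta)
  finally show ?case by simp
qed



lemma Nn_sum: "sum_list (map (\<lambda>q. of_int (snd q) * (\<lambda>(a, b). if even b then 0 else 2 * of_int a) (fst q)) E)
   = 2 * (of_int (Nn E) :: complex)"
proof (induction E)
  case Nil then show ?case by (simp add: Nn_Nil)
next
  case (Cons q E)
  obtain n m s where q: "q = ((n,m),s)" by (metis prod.collapse)
  show ?case using Cons by (simp add: q Nn_Cons algebra_simps)
qed

theorem proposition6p5:
  fixes w :: "letter list"
  assumes "w \<in> derived free_group2 (carrier free_group2)"
    and "w \<notin> derived free_group2 (derived free_group2 (carrier free_group2))"
    and "Phi w 1 \<i> \<noteq> 0"
  shows "- mat 1 \<in> {eval_word w A B | A B. A \<in> SL2 \<and> B \<in> SL2}"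
proof -
  have "w \<in> HW" using assms(1) derived_HW by blast
  then obtain e0 where e0: "expr_ok e0 \<and> expr_val e0 = w" using HW_expr by blast
  have "\<exists>e. (expr_ok e \<and> expr_val e = w) \<and> (\<forall>e'. expr_ok e' \<and> expr_val e' = w \<longrightarrow> length e \<le> length e')"
    using ex_has_least_nat[of "\<lambda>e. expr_ok e \<and> expr_val e = w", OF e0] .
  then have ex: "\<exists>e. expr_ok e \<and> expr_val e = w \<and> (\<forall>e'. expr_ok e' \<and> expr_val e' = w \<longrightarrow> length e \<le> length e')"
    by blast
  define E where "E = shortest_expr w"
  have E: "expr_val E = w"
    using someI_ex[OF ex] unfolding E_def shortest_expr_def by blast
  define g :: "int \<times> int \<Rightarrow> complex" where "g = (\<lambda>(a, b). if even b then 0 else 2 * of_int a)"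
  have termeq: "of_int (sgn a) * (1 - \<i> powi (2 * b)) * 1 powi (a - \<bar>a\<bar> + 1) * (\<Sum>k < nat \<bar>a\<bar>. (1::complex) ^ (2 * k))
      = g (a, b)" for a b :: int
  proof -
    have "of_int (sgn a) * of_nat (nat \<bar>a\<bar>) = (of_int a :: complex)"
      by (metis abs_ge_zero int_nat_eq mult.commute of_int_mult of_int_of_nat_eq sgn_mult_abs)
    moreover have "1 - \<i> powi (2 * b) = (if even b then 0 else (2::complex))" by (simp add: ipow)
    ultimately show ?thesis by (simp add: g_def)
  qed
  have "Phi w 1 \<i> = (\<Sum>p\<in>fst ` set E. of_int (sum_list (map snd (filter (\<lambda>q. fst q = p) E))) * g p)"
    unfolding Phi_def Supp_def R_def E_def[symmetric]
  proof (intro sum.cong refl)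
    fix p assume "p \<in> fst ` set E"
    obtain a b where p: "p = (a, b)" by fastforce
    show "(case p of (\<alpha>, \<beta>) \<Rightarrow> of_int (sum_list (map snd (filter (\<lambda>p. fst p = (\<alpha>, \<beta>)) E))) *
          of_int (sgn \<alpha>) * (1 - \<i> powi (2 * \<beta>)) * 1 powi (\<alpha> - \<bar>\<alpha>\<bar> + 1) * (\<Sum>k<nat \<bar>\<alpha>\<bar>. 1 ^ (2 * k)))
        = of_int (sum_list (map snd (filter (\<lambda>q. fst q = p) E))) * g p"
      using termeq[of a b] by (simp only: p prod.case mult.assoc)
  qed
  also have "\<dots> = sum_list (map (\<lambda>q. of_int (snd q) * g (fst q)) E)"
    by (rule sum_regroup) auto
  also have "\<dots> = 2 * of_int (Nn E)" unfolding g_def by (rule Nn_sum)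
  finally have "Phi w 1 \<i> = 2 * of_int (Nn E)" .
  then have N: "Nn E \<noteq> 0" using assms(3) by auto
  define lam where "lam = exp (\<i> * of_real pi / of_int (2 * Nn E))"
  have lam: "lam \<noteq> 0" by (simp add: lam_def)
  have lampow: "lam powi (2 * Nn E) = -1"
    using N by (simp add: lam_def exp_power_int)
  define A where "A = Dm lam"
  have cancel: "letter_mat A Bm l ** letter_mat A Bm (inv_letter l) = mat 1" for l
  proof -
    obtain a b where l: "l = (a, b)" by fastforce
    show ?thesis using lam
      by (cases a; cases b) (simp_all add: l A_def letter_mat_def inv_letter_def inv_Dm inv_Bm Dm_mult Dm_one Bm_Bm)
  qed
  interpret ev: evalctx2 A Bm lam
  proof
    show "\<And>l. letter_mat A Bm l ** letter_mat A Bm (inv_letter l) = mat 1" by (rule cancel)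
    show "lam \<noteq> 0" by (rule lam)
    show "eval_word gen_x A Bm = Dm lam"
      by (simp add: gen_x_def eval_Cons eval_Nil letter_mat_def A_def matrix_mul_rid)
    show "eval_word gen_y A Bm = Bm"
      by (simp add: gen_y_def eval_Cons eval_Nil letter_mat_def matrix_mul_rid)
  qed
  have "eval_word w A Bm = - mat 1"
    using ev.eval_expr[of E] E lampow by (simp add: Dm_m1)
  moreover have "A \<in> SL2" "Bm \<in> SL2" using lam by (simp_all add: SL2_def A_def det_Dm det_Bm)
  ultimately show ?thesis by (metis (mono_tags, lifting) mem_Collect_eq)
qed


end
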